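(* Let $n\ge r\ge1$, let $\mathcal{O}\subset\mathbb{R}^{n\times r}$ be an open set containing ${\rm St}(n,r)$, and let $f:\mathcal{O}\to\mathbb{R}$ be continuously differentiable; let $L_f$ be a Lipschitz constant of $f$ on ${\rm St}(n,r)$. Consider problem (P): $\min_{X\in\mathcal{S}_{+}^{n,r}} f(X)$ with optimal value $f^*$. Suppose that, in the case $n>r>1$, every global minimizer of (P) has no zero rows. Then: 1. If $n=r$ or $n>r=1$, let $\kappa'>0$ be a constant such that ${\rm dist}(Z,\mathcal{S}_{+}^{n,r})\le\kappa'{\rm dist}(Z,\mathbb{R}_{+}^{n\times r})$ for all $Z\in{\rm St}(n,r)$ (such a constant exists). Then $f(X)-f^*+\kappa' L_f\vartheta(X)\ge0$ for all $X\in{\rm St}(n,r)$. 2. If $n>r>1$, then for every global minimizer $X^*$ of (P) there exists $\delta>0$ such that for all $\epsilon\ge0$ and all $X$ with $\|X-X^*\|_F\le\delta$ and $X\in\mathcal{F}_\epsilon:=\{X\in{\rm St}(n,r):\vartheta(X)=\epsilon\}$, one has $f(X)-f^*+\kappa L_f\vartheta(X)\ge0$, where $\kappa:=\frac{2.1\sqrt{r}[1+3r(n-r)]}{X^*_{i^*j^*}}$ with $X^*_{i^*j^*}$ the smallest nonzero entry of $X^*$. Consequently, there exists $\overline{\rho}>0$ such that for every $\rho\ge\overline{\rho}$ the penalty problem $\min_{X\in{\rm St}(n,r)}\{f(X)+\rho\vartheta(X)\}$ has the same set of global optimal solutions as (P).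
   Context: ${\rm St}(n,r):=\{X\in\mathbb{R}^{n\times r}: X^\top X=I_r\}$, $\mathbb{R}_{+}^{n\times r}$ is the cone of entrywise nonnegative matrices, $\mathcal{S}_{+}^{n,r}:=\mathbb{R}_{+}^{n\times r}\cap{\rm St}(n,r)$, ${\rm dist}$ is the Frobenius-norm distance. $\vartheta(X):=\langle E,\max(0,-X)\rangle=\sum_{i,j}\max(0,-X_{ij})$ is the elementwise $\ell_1$-norm distance from $X$ to $\mathbb{R}_{+}^{n\times r}$ ($E$ the all-ones matrix, $\max$ entrywise). *)

theory Defs
  imports "HOL-Analysis.Analysis"
begin

text \<open>Matrices in R^{n x r} are represented as real^'r^'n (rows indexed by 'n, columns by 'r);
  the norm on this type is the Frobenius norm.\<close>

definition Stiefel :: "(real^'r^'n) set" where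
  "Stiefel = {X. transpose X ** X = mat 1}"

definition nonneg_mats :: "(real^'r^'n) set" where
  "nonneg_mats = {X. \<forall>i j. 0 \<le> X $ i $ j}"

definition Splus :: "(real^'r^'n) set" where
  "Splus = nonneg_mats \<inter> Stiefel"

definition vartheta :: "real^'r^'n \<Rightarrow> real" where
  "vartheta X = (\<Sum>i\<in>UNIV. \<Sum>j\<in>UNIV. max 0 (- X $ i $ j))"

definition C1_on :: "(real^'r^'n) set \<Rightarrow> (real^'r^'n \<Rightarrow> real) \<Rightarrow> bool" where
  "C1_on U f \<longleftrightarrow> (\<exists>f' :: real^'r^'n \<Rightarrow> ((real^'r^'n) \<Rightarrow>\<^sub>L real).
      (\<forall>X\<in>U. (f has_derivative blinfun_apply (f' X)) (at X)) \<and> continuous_on U f')"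

definition global_min_P :: "(real^'r^'n \<Rightarrow> real) \<Rightarrow> real^'r^'n \<Rightarrow> bool" where
  "global_min_P f X \<longleftrightarrow> X \<in> Splus \<and> (\<forall>Y\<in>Splus. f X \<le> f Y)"

definition fstar :: "(real^'r^'n \<Rightarrow> real) \<Rightarrow> real" where
  "fstar f = Inf (f ` Splus)"

definition has_zero_row :: "real^'r^'n \<Rightarrow> bool" where
  "has_zero_row X \<longleftrightarrow> (\<exists>i. \<forall>j. X $ i $ j = 0)"

definition min_nonzero_entry :: "real^'r^'n \<Rightarrow> real" where
  "min_nonzero_entry X = Min {X $ i $ j | i j. X $ i $ j \<noteq> 0}"

definition global_min_penalty :: "(real^'r^'n \<Rightarrow> real) \<Rightarrow> real \<Rightarrow> real^'r^'n \<Rightarrow> bool" where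
  "global_min_penalty f \<rho> X \<longleftrightarrow> X \<in> Stiefel \<and>
     (\<forall>Y\<in>Stiefel. f X + \<rho> * vartheta X \<le> f Y + \<rho> * vartheta Y)"

end

theory Submission
  imports Defs
begin

lemma stiefel_iff: "X \<in> Stiefel \<longleftrightarrow> (\<forall>j k. (\<Sum>l\<in>UNIV. X$l$j * X$l$k) = (if j = k then 1 else 0))"
  by (simp add: Stiefel_def matrix_matrix_mult_def transpose_def mat_def vec_eq_iff)

lemma norm_sq_entries: "(norm (M::real^'r^'n))^2 = (\<Sum>i\<in>UNIV. \<Sum>j\<in>UNIV. (M$i$j)^2)"
  unfolding power2_norm_eq_inner by (simp add: inner_vec_def power2_eq_square)

lemma norm_entries: "norm (M::real^'r^'n) = sqrt (\<Sum>i\<in>UNIV. \<Sum>j\<in>UNIV. (M$i$j)^2)"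
  by (metis norm_sq_entries norm_ge_zero real_sqrt_unique)

lemma entry_le_norm: "\<bar>(M::real^'r^'n)$i$j\<bar> \<le> norm M"
  using component_le_norm_cart[of "M$i" j] Finite_Cartesian_Product.norm_nth_le[of M i] by linarith

lemma norm_le_l1: "norm (M::real^'r^'n) \<le> (\<Sum>i\<in>UNIV. \<Sum>j\<in>UNIV. \<bar>M$i$j\<bar>)"
proof -
  have "norm M \<le> (\<Sum>i\<in>UNIV. norm (M$i))"
    by (simp add: norm_vec_def L2_set_le_sum)
  also have "\<dots> \<le> (\<Sum>i\<in>UNIV. \<Sum>j\<in>UNIV. \<bar>M$i$j\<bar>)"
    by (intro sum_mono norm_le_l1_cart)
  finally show ?thesis .
qed

lemma stiefel_entry_le1: assumes "X \<in> Stiefel" shows "\<bar>X$i$j\<bar> \<le> 1"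
proof -
  have "(\<Sum>l\<in>UNIV. X$l$j * X$l$j) = 1" using assms by (simp add: stiefel_iff)
  moreover have "X$i$j * X$i$j \<le> (\<Sum>l\<in>UNIV. X$l$j * X$l$j)"
    by (rule member_le_sum) auto
  ultimately have "X$i$j^2 \<le> 1" by (simp add: power2_eq_square)
  thus ?thesis by (simp add: abs_square_le_1)
qed

lemma vartheta_nonneg: "0 \<le> vartheta X"
  unfolding vartheta_def by (intro sum_nonneg) auto

lemma vartheta_zero: assumes "vartheta X = 0" shows "X \<in> nonneg_mats"
proof -
  have "\<forall>i\<in>UNIV. (\<Sum>j\<in>UNIV. max 0 (- X $ i $ j)) = 0"
    using assms unfolding vartheta_def by (subst sum_nonneg_eq_0_iff[symmetric]) (auto intro: sum_nonneg)
  hence h: "\<forall>i j. max 0 (- X $ i $ j) = 0" by (simp add: sum_nonneg_eq_0_iff)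
  have "0 \<le> X$i$j" for i j using h[rule_format, of i j] by (simp add: max_def split: if_splits)
  thus ?thesis unfolding nonneg_mats_def by blast
qed

lemma cont_vartheta: "continuous_on A vartheta"
  unfolding vartheta_def by (intro continuous_intros)

lemma closed_Stiefel: "closed (Stiefel :: (real^'r^'n) set)"
proof -
  have "Stiefel = (\<Inter>j. \<Inter>k. {X::real^'r^'n. (\<Sum>l\<in>UNIV. X$l$j * X$l$k) = (if j = k then 1 else 0)})"
    by (auto simp: stiefel_iff)
  also have "closed \<dots>"
    by (intro closed_INT ballI closed_Collect_eq continuous_intros)
  finally show ?thesis .
qed

lemma bounded_Stiefel: "bounded (Stiefel :: (real^'r^'n) set)"
proof -
  have "norm X \<le> real CARD('n) * real CARD('r)" if "X \<in> Stiefel" for X :: "real^'r^'n"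
  proof -
    have "norm X \<le> (\<Sum>i\<in>UNIV. \<Sum>j\<in>UNIV. \<bar>X$i$j\<bar>)" by (rule norm_le_l1)
    also have "\<dots> \<le> (\<Sum>i\<in>(UNIV::'n set). \<Sum>j\<in>(UNIV::'r set). 1)"
      by (intro sum_mono stiefel_entry_le1[OF that])
    finally show ?thesis by simp
  qed
  thus ?thesis by (auto simp: bounded_iff)
qed

lemma compact_Stiefel: "compact (Stiefel :: (real^'r^'n) set)"
  by (simp add: bounded_Stiefel closed_Stiefel compact_eq_bounded_closed)

lemma closed_nonneg: "closed (nonneg_mats :: (real^'r^'n) set)"
proof -
  have "nonneg_mats = (\<Inter>i. \<Inter>j. {X::real^'r^'n. 0 \<le> X$i$j})"
    by (auto simp: nonneg_mats_def)
  also have "closed \<dots>"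
    by (intro closed_INT ballI closed_Collect_le continuous_intros)
  finally show ?thesis .
qed

lemma compact_Splus: "compact (Splus :: (real^'r^'n) set)"
  unfolding Splus_def by (simp add: closed_nonneg compact_Int_closed compact_Stiefel Int_commute)

lemma Splus_nonempty: assumes "CARD('r) \<le> CARD('n)" shows "(Splus :: (real^'r^'n) set) \<noteq> {}"
proof -
  obtain e :: "'r \<Rightarrow> 'n" where e: "inj e"
    using assms card_le_inj[of "UNIV::'r set" "UNIV::'n set"] by auto
  define E :: "real^'r^'n" where "E = (\<chi> i j. if i = e j then 1 else 0)"
  have "E \<in> Stiefel"
  proof -
    have "(\<Sum>l\<in>UNIV. E$l$j * E$l$k) = (if j = k then 1 else 0)" for j k
    proof -
      have "(\<Sum>l\<in>UNIV. E$l$j * E$l$k) = (\<Sum>l\<in>UNIV. if l = e j then (if e j = e k then 1 else 0) else 0)"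
        by (intro sum.cong) (auto simp: E_def)
      also have "\<dots> = (if j = k then 1 else 0)" using e by (auto simp: inj_eq)
      finally show ?thesis .
    qed
    thus ?thesis by (simp add: stiefel_iff)
  qed
  moreover have "E \<in> nonneg_mats" by (auto simp: nonneg_mats_def E_def)
  ultimately show ?thesis by (auto simp: Splus_def)
qed

lemma normalize_cols:
  fixes X Y :: "real^'r^'n"
  assumes X: "X \<in> Stiefel" and Ynn: "\<And>l k. 0 \<le> Y$l$k"
    and orth: "\<And>j k. j \<noteq> k \<Longrightarrow> (\<Sum>l\<in>UNIV. Y$l$j * Y$l$k) = 0"
    and nz: "\<And>k. \<exists>l. Y$l$k \<noteq> 0"
    and cross: "\<And>k. (\<Sum>l\<in>UNIV. Y$l$k * (X$l$k - Y$l$k)) = 0"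
  shows "\<exists>Z\<in>Splus. norm (X - Z) \<le> 2 * norm (X - Y)"
proof -
  define t where "t k = sqrt (\<Sum>l\<in>UNIV. (Y$l$k)^2)" for k
  have tsq: "(t k)^2 = (\<Sum>l\<in>UNIV. (Y$l$k)^2)" for k
    unfolding t_def by (simp add: sum_nonneg)
  have tpos: "t k > 0" for k
  proof -
    obtain l where "Y$l$k \<noteq> 0" using nz by blast
    hence "0 < (Y$l$k)^2" by simp
    also have "\<dots> \<le> (\<Sum>l\<in>UNIV. (Y$l$k)^2)" by (rule member_le_sum) auto
    finally show ?thesis unfolding t_def by simp
  qed
  define Z :: "real^'r^'n" where "Z = (\<chi> l k. Y$l$k / t k)"
  have Zst: "Z \<in> Stiefel"
  proof -
    have "(\<Sum>l\<in>UNIV. Z$l$j * Z$l$k) = (if j = k then 1 else 0)" for j k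
    proof -
      have "(\<Sum>l\<in>UNIV. Z$l$j * Z$l$k) = (\<Sum>l\<in>UNIV. Y$l$j * Y$l$k) / (t j * t k)"
        by (simp add: Z_def sum_divide_distrib)
      also have "\<dots> = (if j = k then 1 else 0)"
      proof (cases "j = k")
        case True
        then show ?thesis using tsq[of k] tpos[of k] by (simp add: power2_eq_square) (metis mult_pos_pos less_irrefl)
      next
        case False
        then show ?thesis using orth by simp
      qed
      finally show ?thesis .
    qed
    thus ?thesis by (simp add: stiefel_iff)
  qed
  have Znn: "Z \<in> nonneg_mats"
    using Ynn tpos by (auto simp: nonneg_mats_def Z_def less_imp_le)
  have XYk: "(\<Sum>l\<in>UNIV. (X$l$k - Y$l$k)^2) = 1 - (t k)^2" for k
  proof -
    have X1: "(\<Sum>l\<in>UNIV. X$l$k * X$l$k) = 1" using X by (simp add: stiefel_iff)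
    have "(\<Sum>l\<in>UNIV. (X$l$k - Y$l$k)^2) = (\<Sum>l\<in>UNIV. X$l$k * X$l$k) - 2 * (\<Sum>l\<in>UNIV. Y$l$k * (X$l$k - Y$l$k)) - (\<Sum>l\<in>UNIV. (Y$l$k)^2)"
    proof -
      have "(\<Sum>l\<in>UNIV. (X$l$k - Y$l$k)^2) = (\<Sum>l\<in>UNIV. X$l$k * X$l$k - 2 * (Y$l$k * (X$l$k - Y$l$k)) - (Y$l$k)^2)"
        by (intro sum.cong) (auto simp: power2_eq_square algebra_simps)
      also have "\<dots> = (\<Sum>l\<in>UNIV. X$l$k * X$l$k) - 2 * (\<Sum>l\<in>UNIV. Y$l$k * (X$l$k - Y$l$k)) - (\<Sum>l\<in>UNIV. (Y$l$k)^2)"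
        by (simp add: sum_subtractf sum_distrib_left)
      finally show ?thesis .
    qed
    also have "\<dots> = 1 - (t k)^2" using X1 cross[of k] tsq[of k] by simp
    finally show ?thesis .
  qed
  have YZk: "(\<Sum>l\<in>UNIV. (Y$l$k - Z$l$k)^2) = (t k - 1)^2" for k
  proof -
    have "(\<Sum>l\<in>UNIV. (Y$l$k - Z$l$k)^2) = (\<Sum>l\<in>UNIV. (Y$l$k)^2) * (1 - 1 / t k)^2"
      unfolding sum_distrib_right by (intro sum.cong) (auto simp: Z_def power2_eq_square algebra_simps)
    also have "\<dots> = (t k)^2 * (1 - 1 / t k)^2" by (simp add: tsq)
    also have "\<dots> = (t k - 1)^2" using tpos[of k]
      by (simp add: power2_eq_square field_simps)
    finally show ?thesis .
  qed
  have cmp: "(t k - 1)^2 \<le> 1 - (t k)^2" for k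
  proof -
    have "0 \<le> (\<Sum>l\<in>UNIV. (X$l$k - Y$l$k)^2)" by (intro sum_nonneg) simp
    hence "0 \<le> 1 - (t k)^2" using XYk[of k] by simp
    hence "(t k)^2 \<le> 1^2" by simp
    hence t1: "t k \<le> 1" by (rule power2_le_imp_le) simp
    have "t k * t k \<le> t k * 1" using t1 tpos[of k] by (intro mult_left_mono) auto
    thus ?thesis by (simp add: power2_eq_square algebra_simps)
  qed
  have "(norm (Y - Z))^2 \<le> (norm (X - Y))^2"
  proof -
    have "(norm (Y - Z))^2 = (\<Sum>l\<in>UNIV. \<Sum>k\<in>UNIV. (Y$l$k - Z$l$k)^2)"
      by (simp add: norm_sq_entries)
    also have "\<dots> = (\<Sum>k\<in>UNIV. \<Sum>l\<in>UNIV. (Y$l$k - Z$l$k)^2)"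
      by (rule sum.swap)
    also have "\<dots> \<le> (\<Sum>k\<in>UNIV. \<Sum>l\<in>UNIV. (X$l$k - Y$l$k)^2)"
      by (rule sum_mono) (simp add: YZk XYk cmp)
    also have "\<dots> = (\<Sum>l\<in>UNIV. \<Sum>k\<in>UNIV. (X$l$k - Y$l$k)^2)"
      by (rule sum.swap)
    also have "\<dots> = (norm (X - Y))^2"
      by (simp add: norm_sq_entries)
    finally show ?thesis .
  qed
  hence YZ: "norm (Y - Z) \<le> norm (X - Y)" by (rule power2_le_imp_le) simp
  have "norm (X - Z) \<le> norm (X - Y) + norm (Y - Z)"
    using norm_triangle_ineq[of "X - Y" "Y - Z"] by simp
  with YZ have "norm (X - Z) \<le> 2 * norm (X - Y)" by simp
  moreover have "Z \<in> Splus" using Zst Znn unfolding Splus_def by blast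
  ultimately show ?thesis by blast
qed

lemma col_nz: assumes "X \<in> Stiefel" shows "\<exists>l. (X::real^'r^'n)$l$k \<noteq> 0"
proof (rule ccontr)
  assume "\<not> ?thesis"
  hence "(\<Sum>l\<in>UNIV. X$l$k * X$l$k) = 0" by simp
  moreover have "(\<Sum>l\<in>UNIV. X$l$k * X$l$k) = 1" using assms by (simp add: stiefel_iff)
  ultimately show False by simp
qed

lemma mne_props:
  fixes Xs :: "real^'r^'n"
  assumes "Xs \<in> Splus"
  shows "0 < min_nonzero_entry Xs" "min_nonzero_entry Xs \<le> 1"
    "\<And>i j. Xs$i$j \<noteq> 0 \<Longrightarrow> min_nonzero_entry Xs \<le> Xs$i$j"
proof -
  let ?E = "{Xs $ i $ j | i j. Xs $ i $ j \<noteq> 0}"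
  have St: "Xs \<in> Stiefel" and nn: "\<And>i j. 0 \<le> Xs$i$j"
    using assms by (auto simp: Splus_def nonneg_mats_def)
  have fin: "finite ?E"
  proof -
    have "?E \<subseteq> (\<lambda>(i,j). Xs$i$j) ` UNIV" by auto
    thus ?thesis by (rule finite_subset) simp
  qed
  obtain l k where lk: "Xs$l$k \<noteq> 0" using col_nz[OF St] by blast
  hence ne: "?E \<noteq> {}" by blast
  have "min_nonzero_entry Xs \<in> ?E" unfolding min_nonzero_entry_def using fin ne by (rule Min_in)
  then obtain i j where ij: "min_nonzero_entry Xs = Xs$i$j" "Xs$i$j \<noteq> 0" by blast
  show "0 < min_nonzero_entry Xs" using ij nn[of i j] by simp
  show "min_nonzero_entry Xs \<le> 1" using ij stiefel_entry_le1[OF St, of i j] by simp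
  show "\<And>i j. Xs$i$j \<noteq> 0 \<Longrightarrow> min_nonzero_entry Xs \<le> Xs$i$j"
    unfolding min_nonzero_entry_def using fin by (intro Min_le) auto
qed

lemma row_identity:
  fixes X :: "real^'r^'n"
  assumes "X \<in> Stiefel"
  shows "(\<Sum>l\<in>UNIV. (\<Sum>k\<in>UNIV. X$l$k)^2) = (\<Sum>l\<in>UNIV. \<Sum>k\<in>UNIV. (X$l$k)^2)"
proof -
  have S: "(\<Sum>l\<in>UNIV. X$l$j * X$l$k) = (if j = k then 1 else 0)" for j k
    using assms by (simp add: stiefel_iff)
  have "(\<Sum>l\<in>UNIV. (\<Sum>k\<in>UNIV. X$l$k)^2) = (\<Sum>l\<in>UNIV. \<Sum>j\<in>UNIV. \<Sum>k\<in>UNIV. X$l$j * X$l$k)"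
    by (simp add: power2_eq_square sum_product)
  also have "\<dots> = (\<Sum>j\<in>UNIV. \<Sum>l\<in>UNIV. \<Sum>k\<in>UNIV. X$l$j * X$l$k)" by (rule sum.swap)
  also have "\<dots> = (\<Sum>j\<in>UNIV. \<Sum>k\<in>UNIV. \<Sum>l\<in>UNIV. X$l$j * X$l$k)"
    by (rule sum.cong[OF refl], rule sum.swap)
  also have "\<dots> = (\<Sum>j\<in>(UNIV::'r set). \<Sum>k\<in>UNIV. (if j = k then 1 else 0))" by (simp only: S)
  also have "\<dots> = (\<Sum>j\<in>(UNIV::'r set). 1)" by simp
  also have "\<dots> = (\<Sum>k\<in>(UNIV::'r set). \<Sum>l\<in>UNIV. X$l$k * X$l$k)" by (simp add: S)
  also have "\<dots> = (\<Sum>l\<in>UNIV. \<Sum>k\<in>UNIV. X$l$k * X$l$k)" by (rule sum.swap)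
  finally show ?thesis by (simp add: power2_eq_square)
qed

lemma sum_split_at:
  fixes f :: "'a::finite \<Rightarrow> real"
  shows "(\<Sum>k\<in>UNIV. f k) = f c + (\<Sum>k\<in>UNIV. if k = c then 0 else f k)"
proof -
  have "(\<Sum>k\<in>UNIV. f k) = (\<Sum>k\<in>UNIV. (if k = c then f c else 0) + (if k = c then 0 else f k))"
    by (intro sum.cong) auto
  also have "\<dots> = f c + (\<Sum>k\<in>UNIV. if k = c then 0 else f k)"
    by (simp add: sum.distrib)
  finally show ?thesis .
qed

lemma entry_ineq:
  fixes a x d m :: real
  assumes "\<bar>x\<bar> \<le> d" "m - d \<le> a" "a \<le> 1"
  shows "2 * a * x - x^2 \<ge> (2*m - 3*d) * max x 0 - (2 + d) * max 0 (-x)"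
proof (cases "x \<ge> 0")
  case True
  have "x * x \<le> d * x" using assms(1) True by (intro mult_right_mono) auto
  moreover have "(m - d) * x \<le> a * x" using assms(2) True by (intro mult_right_mono) auto
  ultimately show ?thesis using True by (simp add: power2_eq_square algebra_simps max_def)
next
  case False
  have "(-x) * (-x) \<le> d * (- x)" using assms(1) False by (intro mult_right_mono) auto
  moreover have "1 * x \<le> a * x" using assms(3) False by (intro mult_right_mono_neg) auto
  ultimately have "(2 + d) * x \<le> 2 * (a * x) - x * x" by (simp only: algebra_simps)
  moreover have "max x 0 = 0" "max 0 (-x) = -x" using False by auto
  ultimately show ?thesis by (simp add: power2_eq_square algebra_simps)
qed

lemma local_eb_nozero:
  fixes Xs :: "real^'r^'n"
  assumes XsS: "Xs \<in> Splus" and nzr: "\<And>l. \<exists>j. Xs$l$j \<noteq> 0"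
  shows "\<exists>\<delta>>0. \<forall>X\<in>Stiefel. norm (X - Xs) \<le> \<delta> \<longrightarrow>
           (\<exists>Z\<in>Splus. norm (X - Z) \<le> (5 / min_nonzero_entry Xs) * vartheta X)"
proof -
  define m where "m = min_nonzero_entry Xs"
  have m0: "0 < m" and m1: "m \<le> 1" and mle: "\<And>i j. Xs$i$j \<noteq> 0 \<Longrightarrow> m \<le> Xs$i$j"
    using mne_props[OF XsS] by (auto simp: m_def)
  have XsSt: "Xs \<in> Stiefel" and Xsnn: "\<And>i j. 0 \<le> Xs$i$j"
    using XsS by (auto simp: Splus_def nonneg_mats_def)
  have uniq: "j = k" if "Xs$l$j \<noteq> 0" "Xs$l$k \<noteq> 0" for l j k
  proof (rule ccontr)
    assume "j \<noteq> k"
    hence "(\<Sum>i\<in>UNIV. Xs$i$j * Xs$i$k) = 0" using XsSt by (simp add: stiefel_iff)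
    hence "\<forall>i\<in>UNIV. Xs$i$j * Xs$i$k = 0"
      by (subst sum_nonneg_eq_0_iff[symmetric]) (auto intro: mult_nonneg_nonneg Xsnn)
    thus False using that by (metis UNIV_I mult_eq_0_iff)
  qed
  define c where "c l = (SOME j. Xs$l$j \<noteq> 0)" for l
  have c1: "Xs$l$(c l) \<noteq> 0" for l unfolding c_def using nzr[of l] by (rule someI_ex)
  have c2: "Xs$l$k = 0" if "k \<noteq> c l" for l k using uniq[OF c1[of l]] that by blast
  define \<delta> where "\<delta> = m / 6"
  have d0: "0 < \<delta>" using m0 by (simp add: \<delta>_def)
  show ?thesis
  proof (intro exI[of _ \<delta>] conjI d0 ballI impI)
    fix X :: "real^'r^'n"
    assume XSt: "X \<in> Stiefel" and close: "norm (X - Xs) \<le> \<delta>"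
    have ent: "\<bar>X$l$k - Xs$l$k\<bar> \<le> \<delta>" for l k
      using entry_le_norm[of "X - Xs" l k] close by simp
    have off: "\<bar>X$l$k\<bar> \<le> \<delta>" if "k \<noteq> c l" for l k using ent[of l k] c2[OF that] by simp
    have aon: "m - \<delta> \<le> X$l$(c l)" for l
      using ent[of l "c l"] mle[OF c1[of l]] by linarith
    have aon1: "X$l$(c l) \<le> 1" for l using stiefel_entry_le1[OF XSt] by (simp add: abs_le_iff)
    have apos: "0 < X$l$(c l)" for l using aon[of l] m0 by (simp add: \<delta>_def)
    define Y :: "real^'r^'n" where "Y = (\<chi> l k. if k = c l then X$l$k else 0)"
    obtain Z where Z: "Z \<in> Splus" "norm (X - Z) \<le> 2 * norm (X - Y)"
    proof -
      have "\<exists>Z\<in>Splus. norm (X - Z) \<le> 2 * norm (X - Y)"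
      proof (rule normalize_cols[OF XSt])
        show "0 \<le> Y$l$k" for l k using apos[of l] by (auto simp: Y_def less_imp_le)
        show "(\<Sum>l\<in>UNIV. Y$l$j * Y$l$k) = 0" if "j \<noteq> k" for j k
          using that by (intro sum.neutral) (auto simp: Y_def)
        show "\<exists>l. Y$l$k \<noteq> 0" for k
        proof -
          obtain l where "Xs$l$k \<noteq> 0" using col_nz[OF XsSt] by blast
          hence "k = c l" using uniq c1 by blast
          thus ?thesis using apos[of l] by (intro exI[of _ l]) (auto simp: Y_def)
        qed
        show "(\<Sum>l\<in>UNIV. Y$l$k * (X$l$k - Y$l$k)) = 0" for k
          by (intro sum.neutral) (auto simp: Y_def)
      qed
      thus ?thesis using that by blast
    qed
    define pp :: "real \<Rightarrow> real" where "pp x = max x 0" for x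
    define nn :: "real \<Rightarrow> real" where "nn x = max 0 (-x)" for x
    define P where "P = (\<Sum>l\<in>UNIV. \<Sum>k\<in>UNIV. if k = c l then 0 else pp (X$l$k))"
    define N where "N = (\<Sum>l\<in>UNIV. \<Sum>k\<in>UNIV. if k = c l then 0 else nn (X$l$k))"
    have P0: "0 \<le> P" unfolding P_def pp_def by (intro sum_nonneg) auto
    have N0: "0 \<le> N" unfolding N_def nn_def by (intro sum_nonneg) auto
    have Nth: "N \<le> vartheta X"
      unfolding N_def vartheta_def nn_def by (intro sum_mono) auto
    have XY: "norm (X - Y) \<le> P + N"
    proof -
      have "norm (X - Y) \<le> (\<Sum>l\<in>UNIV. \<Sum>k\<in>UNIV. \<bar>(X - Y)$l$k\<bar>)" by (rule norm_le_l1)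
      also have "\<dots> = (\<Sum>l\<in>UNIV. \<Sum>k\<in>UNIV. (if k = c l then 0 else pp (X$l$k)) + (if k = c l then 0 else nn (X$l$k)))"
        by (intro sum.cong refl) (auto simp: Y_def pp_def nn_def)
      also have "\<dots> = P + N" by (simp add: P_def N_def sum.distrib)
      finally show ?thesis .
    qed
    have key: "(2*m - 3*\<delta>) * P \<le> (2 + \<delta>) * N"
    proof -
      have row: "(\<Sum>k\<in>UNIV. X$l$k)^2 - (\<Sum>k\<in>UNIV. (X$l$k)^2) \<ge>
                 (\<Sum>k\<in>UNIV. if k = c l then 0 else (2*m - 3*\<delta>) * pp (X$l$k) - (2 + \<delta>) * nn (X$l$k))" for l
      proof -
        define a where "a = X$l$(c l)"
        define B where "B = (\<Sum>k\<in>UNIV. if k = c l then 0 else X$l$k)"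
        define Q where "Q = (\<Sum>k\<in>UNIV. if k = c l then 0 else (X$l$k)^2)"
        have s1: "(\<Sum>k\<in>UNIV. X$l$k) = a + B" unfolding a_def B_def by (rule sum_split_at)
        have s2: "(\<Sum>k\<in>UNIV. (X$l$k)^2) = a^2 + Q" unfolding a_def Q_def by (rule sum_split_at)
        have "(\<Sum>k\<in>UNIV. if k = c l then 0 else (2*m - 3*\<delta>) * pp (X$l$k) - (2 + \<delta>) * nn (X$l$k))
              \<le> (\<Sum>k\<in>UNIV. if k = c l then 0 else 2 * a * X$l$k - (X$l$k)^2)"
          unfolding pp_def nn_def a_def
          by (rule sum_mono) (auto intro!: entry_ineq off aon aon1)
        also have "\<dots> = (\<Sum>k\<in>UNIV. 2 * a * (if k = c l then 0 else X$l$k) - (if k = c l then 0 else (X$l$k)^2))"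
          by (intro sum.cong refl) auto
        also have "\<dots> = 2 * a * B - Q"
          by (simp only: B_def Q_def sum_subtractf sum_distrib_left)
        also have "\<dots> \<le> (a + B)^2 - (a^2 + Q)" by (simp add: power2_eq_square algebra_simps)
        finally show ?thesis by (simp add: s1 s2)
      qed
      have "(\<Sum>l\<in>UNIV. \<Sum>k\<in>UNIV. if k = c l then 0 else (2*m - 3*\<delta>) * pp (X$l$k) - (2 + \<delta>) * nn (X$l$k))
            \<le> (\<Sum>l\<in>UNIV. (\<Sum>k\<in>UNIV. X$l$k)^2 - (\<Sum>k\<in>UNIV. (X$l$k)^2))"
        by (rule sum_mono) (rule row)
      also have "\<dots> = 0" using row_identity[OF XSt] by (simp add: sum_subtractf)
      finally have "(\<Sum>l\<in>UNIV. \<Sum>k\<in>UNIV. if k = c l then 0 else (2*m - 3*\<delta>) * pp (X$l$k) - (2 + \<delta>) * nn (X$l$k)) \<le> 0" .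
      moreover have "(\<Sum>l\<in>UNIV. \<Sum>k\<in>UNIV. if k = c l then 0 else (2*m - 3*\<delta>) * pp (X$l$k) - (2 + \<delta>) * nn (X$l$k))
           = (2*m - 3*\<delta>) * P - (2 + \<delta>) * N"
      proof -
        have "(\<Sum>l\<in>UNIV. \<Sum>k\<in>UNIV. if k = c l then 0 else (2*m - 3*\<delta>) * pp (X$l$k) - (2 + \<delta>) * nn (X$l$k))
           = (\<Sum>l\<in>UNIV. \<Sum>k\<in>UNIV. (2*m - 3*\<delta>) * (if k = c l then 0 else pp (X$l$k)) - (2 + \<delta>) * (if k = c l then 0 else nn (X$l$k)))"
          by (intro sum.cong refl) auto
        also have "\<dots> = (2*m - 3*\<delta>) * P - (2 + \<delta>) * N"
          by (simp add: P_def N_def sum_subtractf sum_distrib_left)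
        finally show ?thesis .
      qed
      ultimately show ?thesis by simp
    qed
    have "2 * (P + N) \<le> 5 / m * N"
    proof -
      have k2: "(3/2) * m * P \<le> (2 + m/6) * N" using key by (simp add: \<delta>_def algebra_simps)
      have "m * N \<le> 1 * N" using m1 N0 by (intro mult_right_mono) auto
      hence "m * (2 * (P + N)) \<le> 5 * N" using k2 P0 N0 m0 by (simp add: algebra_simps)
      thus ?thesis using m0 by (simp add: field_simps)
    qed
    also have "\<dots> \<le> 5 / m * vartheta X" using Nth m0 by (intro mult_left_mono) auto
    finally have fin: "2 * (P + N) \<le> 5 / m * vartheta X" .
    have "norm (X - Z) \<le> 2 * (P + N)"
      by (rule order_trans[OF Z(2)]) (rule mult_left_mono[OF XY], simp)
    hence "norm (X - Z) \<le> 5 / m * vartheta X" using fin by (rule order_trans)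
    thus "\<exists>Z\<in>Splus. norm (X - Z) \<le> 5 / min_nonzero_entry Xs * vartheta X"
      using Z(1) by (auto simp: m_def)
  qed
qed

lemma local_eb_r1:
  fixes Xs :: "real^'r^'n"
  assumes XsS: "Xs \<in> Splus" and r1: "CARD('r) = 1"
  shows "\<exists>\<delta>>0. \<forall>X\<in>Stiefel. norm (X - Xs) \<le> \<delta> \<longrightarrow>
           (\<exists>Z\<in>Splus. norm (X - Z) \<le> 2 * vartheta X)"
proof -
  define m where "m = min_nonzero_entry Xs"
  have m0: "0 < m" and mle: "\<And>i j. Xs$i$j \<noteq> 0 \<Longrightarrow> m \<le> Xs$i$j"
    using mne_props[OF XsS] by (auto simp: m_def)
  have XsSt: "Xs \<in> Stiefel" using XsS by (auto simp: Splus_def)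
  have same: "(j::'r) = k" for j k
  proof -
    have "card (UNIV::'r set) = 1" using r1 by simp
    then obtain z where "(UNIV::'r set) = {z}" by (auto simp: card_Suc_eq)
    thus ?thesis by (metis UNIV_I singletonD)
  qed
  show ?thesis
  proof (intro exI[of _ "m/2"] conjI ballI impI)
    show "0 < m/2" using m0 by simp
    fix X :: "real^'r^'n"
    assume XSt: "X \<in> Stiefel" and close: "norm (X - Xs) \<le> m/2"
    have ent: "\<bar>X$l$k - Xs$l$k\<bar> \<le> m/2" for l k
      using entry_le_norm[of "X - Xs" l k] close by simp
    define Y :: "real^'r^'n" where "Y = (\<chi> l k. max (X$l$k) 0)"
    have "\<exists>Z\<in>Splus. norm (X - Z) \<le> 2 * norm (X - Y)"
    proof (rule normalize_cols[OF XSt])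
      show "0 \<le> Y$l$k" for l k by (simp add: Y_def)
      show "(\<Sum>l\<in>UNIV. Y$l$j * Y$l$k) = 0" if "j \<noteq> k" for j k
        using that same by blast
      show "\<exists>l. Y$l$k \<noteq> 0" for k
      proof -
        obtain l where l: "Xs$l$k \<noteq> 0" using col_nz[OF XsSt] by blast
        have "m \<le> Xs$l$k" using mle[OF l] .
        hence "0 < X$l$k" using ent[of l k] m0 by linarith
        thus ?thesis by (intro exI[of _ l]) (simp add: Y_def)
      qed
      show "(\<Sum>l\<in>UNIV. Y$l$k * (X$l$k - Y$l$k)) = 0" for k
        by (intro sum.neutral) (auto simp: Y_def max_def)
    qed
    then obtain Z where Z: "Z \<in> Splus" "norm (X - Z) \<le> 2 * norm (X - Y)" by blast
    have "norm (X - Y) \<le> (\<Sum>l\<in>UNIV. \<Sum>k\<in>UNIV. \<bar>(X - Y)$l$k\<bar>)" by (rule norm_le_l1)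
    also have "\<dots> = vartheta X" unfolding vartheta_def
      by (intro sum.cong refl) (auto simp: Y_def max_def)
    finally have "norm (X - Y) \<le> vartheta X" .
    hence "norm (X - Z) \<le> 2 * vartheta X"
      by (intro order_trans[OF Z(2)]) simp
    thus "\<exists>Z\<in>Splus. norm (X - Z) \<le> 2 * vartheta X" using Z(1) by blast
  qed
qed

lemma square_nozero:
  fixes Y :: "real^'r^'n"
  assumes YS: "Y \<in> Splus" and eq: "CARD('n) = CARD('r)"
  shows "\<exists>j. Y$l$j \<noteq> 0"
proof -
  have St: "Y \<in> Stiefel" and nn: "\<And>i j. 0 \<le> Y$i$j" using YS by (auto simp: Splus_def nonneg_mats_def)
  define g where "g k = (SOME l. Y$l$k \<noteq> 0)" for k
  have g1: "Y$(g k)$k \<noteq> 0" for k unfolding g_def using col_nz[OF St, of k] by (rule someI_ex)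
  have inj: "inj g"
  proof (rule injI)
    fix j k assume gjk: "g j = g k"
    show "j = k"
    proof (rule ccontr)
      assume "j \<noteq> k"
      hence "(\<Sum>i\<in>UNIV. Y$i$j * Y$i$k) = 0" using St by (simp add: stiefel_iff)
      hence "\<forall>i\<in>UNIV. Y$i$j * Y$i$k = 0"
        by (subst sum_nonneg_eq_0_iff[symmetric]) (auto intro: mult_nonneg_nonneg nn)
      hence "Y$(g j)$j * Y$(g j)$k = 0" by blast
      thus False using g1[of j] g1[of k] gjk by simp
    qed
  qed
  have "card (range g) = CARD('n)" using card_image[OF inj] eq by simp
  hence "range g = UNIV" by (intro card_subset_eq) auto
  then obtain k where "l = g k" by (metis UNIV_I imageE)
  thus ?thesis using g1[of k] by blast
qed

lemma fstar_eq: assumes "global_min_P f Xs" shows "fstar f = f Xs"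
  using assms unfolding global_min_P_def fstar_def by (intro cInf_eq_minimum) auto

lemma bound_from_eb:
  fixes f :: "real^'r^'n \<Rightarrow> real"
  assumes Lf: "lipschitz_on Lf Stiefel f" and gm: "global_min_P f Xs"
    and X: "X \<in> Stiefel" and Z: "Z \<in> Splus" and XZ: "norm (X - Z) \<le> C * vartheta X"
    and CK: "C \<le> K"
  shows "f X - fstar f + K * Lf * vartheta X \<ge> 0"
proof -
  have L0: "0 \<le> Lf" using Lf by (simp add: lipschitz_on_def)
  have ZSt: "Z \<in> Stiefel" using Z by (simp add: Splus_def)
  have "f Xs \<le> f Z" using gm Z by (simp add: global_min_P_def)
  moreover have "dist (f Z) (f X) \<le> Lf * dist Z X" using Lf ZSt X by (simp add: lipschitz_on_def)
  hence "f Z - f X \<le> Lf * norm (X - Z)" by (simp add: dist_norm dist_commute norm_minus_commute)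
  moreover have "Lf * norm (X - Z) \<le> Lf * (C * vartheta X)" using XZ L0 by (rule mult_left_mono)
  moreover have "C * vartheta X \<le> K * vartheta X" using CK vartheta_nonneg by (rule mult_right_mono)
  hence "Lf * (C * vartheta X) \<le> Lf * (K * vartheta X)" using L0 by (rule mult_left_mono)
  ultimately show ?thesis using fstar_eq[OF gm] by (simp add: algebra_simps)
qed

lemma f_cont: assumes "lipschitz_on Lf Stiefel f" shows "continuous_on Stiefel f"
  using assms by (rule lipschitz_on_continuous_on)

lemma exists_min:
  fixes f :: "real^'r^'n \<Rightarrow> real"
  assumes nr: "CARD('r) \<le> CARD('n)" and Lf: "lipschitz_on Lf Stiefel f"
  shows "\<exists>Xm. global_min_P f Xm"
proof -
  have "continuous_on Splus f"
    using f_cont[OF Lf] by (rule continuous_on_subset) (auto simp: Splus_def)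
  then obtain Xm where "Xm \<in> Splus" "\<forall>Y\<in>Splus. f Xm \<le> f Y"
    using continuous_attains_inf[OF compact_Splus Splus_nonempty[OF nr]] by blast
  thus ?thesis unfolding global_min_P_def by blast
qed

lemma local_at_min:
  fixes f :: "real^'r^'n \<Rightarrow> real"
  assumes Lf: "lipschitz_on Lf Stiefel f" and gm: "global_min_P f Y"
    and cs: "CARD('r) = 1 \<or> (\<forall>l. \<exists>j. Y$l$j \<noteq> 0)"
  shows "\<exists>\<delta>>0. \<exists>C. \<forall>X\<in>Stiefel. norm (X - Y) \<le> \<delta> \<longrightarrow> 0 \<le> f X - fstar f + C * vartheta X"
proof -
  have YS: "Y \<in> Splus" using gm by (simp add: global_min_P_def)
  from cs show ?thesis
  proof
    assume r1: "CARD('r) = 1"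
    obtain \<delta> where d: "\<delta> > 0" "\<forall>X\<in>Stiefel. norm (X - Y) \<le> \<delta> \<longrightarrow> (\<exists>Z\<in>Splus. norm (X - Z) \<le> 2 * vartheta X)"
      using local_eb_r1[OF YS r1] by blast
    show ?thesis
    proof (rule exI[of _ \<delta>], rule conjI[OF d(1)], rule exI[of _ "2 * Lf"], intro ballI impI)
      fix X assume "X \<in> Stiefel" "norm (X - Y) \<le> \<delta>"
      then obtain Z where "Z \<in> Splus" "norm (X - Z) \<le> 2 * vartheta X" using d(2) by blast
      from bound_from_eb[OF Lf gm \<open>X \<in> Stiefel\<close> this order_refl]
      show "0 \<le> f X - fstar f + 2 * Lf * vartheta X" by simp
    qed
  next
    assume nz: "\<forall>l. \<exists>j. Y$l$j \<noteq> 0"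
    obtain \<delta> where d: "\<delta> > 0" "\<forall>X\<in>Stiefel. norm (X - Y) \<le> \<delta> \<longrightarrow>
        (\<exists>Z\<in>Splus. norm (X - Z) \<le> (5 / min_nonzero_entry Y) * vartheta X)"
      using local_eb_nozero[OF YS] nz by blast
    show ?thesis
    proof (rule exI[of _ \<delta>], rule conjI[OF d(1)], rule exI[of _ "(5 / min_nonzero_entry Y) * Lf"], intro ballI impI)
      fix X assume "X \<in> Stiefel" "norm (X - Y) \<le> \<delta>"
      then obtain Z where "Z \<in> Splus" "norm (X - Z) \<le> (5 / min_nonzero_entry Y) * vartheta X" using d(2) by blast
      from bound_from_eb[OF Lf gm \<open>X \<in> Stiefel\<close> this order_refl]
      show "0 \<le> f X - fstar f + (5 / min_nonzero_entry Y) * Lf * vartheta X" by simp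
    qed
  qed
qed

lemma global_bound:
  fixes f :: "real^'r^'n \<Rightarrow> real"
  assumes nr: "CARD('r) \<le> CARD('n)" and Lf: "lipschitz_on Lf Stiefel f"
    and loc: "\<And>Y. global_min_P f Y \<Longrightarrow>
       \<exists>\<delta>>0. \<exists>C. \<forall>X\<in>Stiefel. norm (X - Y) \<le> \<delta> \<longrightarrow> 0 \<le> f X - fstar f + C * vartheta X"
  shows "\<exists>\<rho>0>0. \<forall>Y\<in>Stiefel. 0 \<le> f Y - fstar f + \<rho>0 * vartheta Y"
proof (rule ccontr)
  assume neg: "\<not> ?thesis"
  obtain Xm where gXm: "global_min_P f Xm" using exists_min[OF nr Lf] by blast
  define fs where "fs = fstar f"
  have fsXm: "fs = f Xm" using fstar_eq[OF gXm] by (simp add: fs_def)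
  have "\<forall>k::nat. \<exists>Y. Y \<in> Stiefel \<and> f Y - fs + (real k + 1) * vartheta Y < 0"
  proof
    fix k :: nat
    have "\<not> (\<forall>Y\<in>Stiefel. 0 \<le> f Y - fstar f + (real k + 1) * vartheta Y)"
      using neg by (metis add_nonneg_pos of_nat_0_le_iff zero_less_one)
    thus "\<exists>Y. Y \<in> Stiefel \<and> f Y - fs + (real k + 1) * vartheta Y < 0"
      by (auto simp: fs_def not_le)
  qed
  then obtain Ys where Ys: "\<And>k. Ys k \<in> Stiefel" "\<And>k. f (Ys k) - fs + (real k + 1) * vartheta (Ys k) < 0"
    by metis
  have fc: "continuous_on Stiefel f" using Lf by (rule f_cont)
  obtain Ym where Ym: "Ym \<in> Stiefel" "\<And>Y. Y \<in> Stiefel \<Longrightarrow> f Ym \<le> f Y"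
    using continuous_attains_inf[OF compact_Stiefel _ fc] Ys(1) by blast
  define B where "B = fs - f Ym"
  have thb: "vartheta (Ys k) \<le> B * inverse (real (Suc k))" for k
  proof -
    have "(real k + 1) * vartheta (Ys k) \<le> B" using Ys(2)[of k] Ym(2)[OF Ys(1)[of k]] by (simp add: B_def)
    thus ?thesis by (simp add: field_simps)
  qed
  obtain L r where L: "L \<in> Stiefel" "strict_mono r" "(Ys \<circ> r) \<longlonglongrightarrow> L"
    using seq_compactE[OF compact_imp_seq_compact[OF compact_Stiefel], of Ys] Ys(1) by blast
  have th_lim: "(\<lambda>k. vartheta (Ys (r k))) \<longlonglongrightarrow> vartheta L"
    using continuous_on_tendsto_compose[OF cont_vartheta[of UNIV] L(3)] by (simp add: o_def)
  have "(\<lambda>k. B * inverse (real (Suc k))) \<longlonglongrightarrow> B * 0"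
    by (intro tendsto_mult tendsto_const LIMSEQ_inverse_real_of_nat)
  moreover have "vartheta (Ys (r k)) \<le> B * inverse (real (Suc k))" for k
  proof -
    have "vartheta (Ys (r k)) \<le> B * inverse (real (Suc (r k)))" by (rule thb)
    also have "\<dots> \<le> B * inverse (real (Suc k))"
    proof -
      have B0: "0 \<le> B" using thb[of 0] vartheta_nonneg[of "Ys 0"] by simp
      have "k \<le> r k" using seq_suble[OF L(2)] .
      hence "inverse (real (Suc (r k))) \<le> inverse (real (Suc k))" by (intro le_imp_inverse_le) auto
      thus ?thesis using B0 by (rule mult_left_mono)
    qed
    finally show ?thesis .
  qed
  ultimately have "vartheta L \<le> B * 0" using th_lim by (intro LIMSEQ_le[OF th_lim]) auto
  hence "vartheta L = 0" using vartheta_nonneg[of L] by simp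
  hence LS: "L \<in> Splus" using vartheta_zero L(1) by (auto simp: Splus_def)
  have f_lim: "(\<lambda>k. f (Ys (r k))) \<longlonglongrightarrow> f L"
    using continuous_on_tendsto_compose[OF fc L(3) L(1)] Ys(1) by (simp add: o_def)
  have "f (Ys (r k)) \<le> fs" for k
    using Ys(2)[of "r k"] vartheta_nonneg[of "Ys (r k)"]
    by (smt (verit) mult_nonneg_nonneg of_nat_0_le_iff)
  hence "f L \<le> fs" using f_lim by (intro LIMSEQ_le_const2) auto
  hence gL: "global_min_P f L" using LS gXm fsXm by (auto simp: global_min_P_def)
  obtain \<delta> C where dC: "\<delta> > 0" "\<forall>X\<in>Stiefel. norm (X - L) \<le> \<delta> \<longrightarrow> 0 \<le> f X - fstar f + C * vartheta X"
    using loc[OF gL] by blast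
  obtain n1 where n1: "\<forall>n\<ge>n1. norm ((Ys \<circ> r) n - L) < \<delta>" using L(3) dC(1) by (auto simp: LIMSEQ_iff)
  obtain n2 :: nat where n2: "C \<le> real n2" using real_arch_simple by blast
  define k where "k = max n1 n2"
  have "norm (Ys (r k) - L) \<le> \<delta>" using n1[rule_format, of k] by (simp add: k_def less_imp_le)
  hence c1: "0 \<le> f (Ys (r k)) - fs + C * vartheta (Ys (r k))" using dC(2) Ys(1) by (simp add: fs_def)
  have "C \<le> real (r k) + 1" using n2 seq_suble[OF L(2), of k] unfolding k_def by linarith
  hence "C * vartheta (Ys (r k)) \<le> (real (r k) + 1) * vartheta (Ys (r k))"
    using vartheta_nonneg by (rule mult_right_mono)
  thus False using c1 Ys(2)[of "r k"] by linarith
qed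

lemma vartheta_nn0: assumes "X \<in> nonneg_mats" shows "vartheta X = 0"
proof -
  have "max 0 (- X$i$j) = 0" for i j
  proof -
    have "0 \<le> X$i$j" using assms by (simp add: nonneg_mats_def)
    thus ?thesis by (auto simp: max_def)
  qed
  thus ?thesis unfolding vartheta_def by simp
qed

theorem theorem3p6:
  fixes f :: "real^'r^'n \<Rightarrow> real" and U :: "(real^'r^'n) set" and Lf :: real
  assumes nr: "CARD('n) \<ge> CARD('r)"
    and openO: "open U" and StO: "Stiefel \<subseteq> U"
    and C1: "C1_on U f"
    and Lf: "lipschitz_on Lf Stiefel f"
    and nozero: "CARD('n) > CARD('r) \<and> CARD('r) > 1 \<Longrightarrow>
                   (\<forall>X. global_min_P f X \<longrightarrow> \<not> has_zero_row X)"
  shows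
    "((CARD('n) = CARD('r) \<or> (CARD('n) > CARD('r) \<and> CARD('r) = 1)) \<longrightarrow>
        (\<forall>\<kappa>'>0. (\<forall>Z\<in>(Stiefel :: (real^'r^'n) set).
                     infdist Z Splus \<le> \<kappa>' * infdist Z nonneg_mats) \<longrightarrow>
           (\<forall>X\<in>(Stiefel :: (real^'r^'n) set). f X - fstar f + \<kappa>' * Lf * vartheta X \<ge> 0)))
     \<and>
     ((CARD('n) > CARD('r) \<and> CARD('r) > 1) \<longrightarrow>
        (\<forall>Xs. global_min_P f Xs \<longrightarrow>
           (\<exists>\<delta>>0. \<forall>\<epsilon>\<ge>0. \<forall>X. norm (X - Xs) \<le> \<delta> \<and> X \<in> Stiefel \<and> vartheta X = \<epsilon> \<longrightarrow>
              f X - fstar f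
                + ((21/10) * sqrt (real CARD('r)) * (1 + 3 * real CARD('r) * (real CARD('n) - real CARD('r)))
                    / min_nonzero_entry Xs) * Lf * vartheta X \<ge> 0)))
     \<and>
     (\<exists>\<rho>bar>0. \<forall>\<rho>\<ge>\<rho>bar. {X. global_min_penalty f \<rho> X} = {X. global_min_P f X})"
proof (intro conjI impI allI ballI)
  obtain Xm where gXm: "global_min_P f Xm" using exists_min[OF nr Lf] by blast
  have XmS: "Xm \<in> Splus" using gXm by (simp add: global_min_P_def)
  have fsXm: "fstar f = f Xm" by (rule fstar_eq[OF gXm])
  {
    fix \<kappa>' :: real and X :: "real^'r^'n"
    assume k0: "\<kappa>' > 0"
      and H: "\<forall>Z\<in>(Stiefel :: (real^'r^'n) set). infdist Z Splus \<le> \<kappa>' * infdist Z nonneg_mats"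
      and XSt: "X \<in> Stiefel"
    obtain Z where Z: "Z \<in> Splus" "infdist X Splus = dist X Z"
      using infdist_attains_inf[OF compact_imp_closed[OF compact_Splus] Splus_nonempty[OF nr]] by blast
    define P :: "real^'r^'n" where "P = (\<chi> i j. max (X$i$j) 0)"
    have PN: "P \<in> nonneg_mats" by (simp add: P_def nonneg_mats_def)
    have "infdist X nonneg_mats \<le> dist X P" using PN by (rule infdist_le)
    also have "\<dots> \<le> (\<Sum>i\<in>UNIV. \<Sum>j\<in>UNIV. \<bar>(X - P)$i$j\<bar>)" unfolding dist_norm by (rule norm_le_l1)
    also have "\<dots> = vartheta X" unfolding vartheta_def
      by (intro sum.cong refl) (auto simp: P_def max_def)
    finally have "infdist X nonneg_mats \<le> vartheta X" .
    hence "\<kappa>' * infdist X nonneg_mats \<le> \<kappa>' * vartheta X" using k0 by (intro mult_left_mono) auto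
    moreover have "infdist X Splus \<le> \<kappa>' * infdist X nonneg_mats" using H XSt by blast
    ultimately have "infdist X Splus \<le> \<kappa>' * vartheta X" by (rule order_trans[rotated])
    hence "norm (X - Z) \<le> \<kappa>' * vartheta X" using Z(2) by (simp add: dist_norm)
    from bound_from_eb[OF Lf gXm XSt Z(1) this order_refl]
    have "f X - fstar f + \<kappa>' * Lf * vartheta X \<ge> 0" .
  } note part1 = this
  show "f X - fstar f + \<kappa>' * Lf * vartheta X \<ge> 0"
    if "CARD('n) = CARD('r) \<or> (CARD('n) > CARD('r) \<and> CARD('r) = 1)" "\<kappa>' > 0"
      "\<forall>Z\<in>(Stiefel :: (real^'r^'n) set). infdist Z Splus \<le> \<kappa>' * infdist Z nonneg_mats"
      "X \<in> Stiefel" for \<kappa>' X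
    using part1 that(2-4) by blast
  show "\<exists>\<delta>>0. \<forall>\<epsilon>\<ge>0. \<forall>X. norm (X - Xs) \<le> \<delta> \<and> X \<in> Stiefel \<and> vartheta X = \<epsilon> \<longrightarrow>
              f X - fstar f
                + ((21/10) * sqrt (real CARD('r)) * (1 + 3 * real CARD('r) * (real CARD('n) - real CARD('r)))
                    / min_nonzero_entry Xs) * Lf * vartheta X \<ge> 0"
    if cs: "CARD('n) > CARD('r) \<and> CARD('r) > 1" and gm: "global_min_P f Xs" for Xs
  proof -
    have XsS: "Xs \<in> Splus" using gm by (simp add: global_min_P_def)
    have nz: "\<And>l. \<exists>j. Xs$l$j \<noteq> 0" using nozero[OF cs] gm by (auto simp: has_zero_row_def)
    obtain \<delta> where d: "\<delta> > 0" "\<forall>X\<in>Stiefel. norm (X - Xs) \<le> \<delta> \<longrightarrow>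
        (\<exists>Z\<in>Splus. norm (X - Z) \<le> (5 / min_nonzero_entry Xs) * vartheta X)"
      using local_eb_nozero[OF XsS nz] by blast
    define K where "K = (21/10) * sqrt (real CARD('r)) * (1 + 3 * real CARD('r) * (real CARD('n) - real CARD('r)))
                    / min_nonzero_entry Xs"
    have m0: "0 < min_nonzero_entry Xs" using mne_props[OF XsS] by simp
    have "5 \<le> (21/10) * sqrt (real CARD('r)) * (1 + 3 * real CARD('r) * (real CARD('n) - real CARD('r)))"
    proof -
      have s1: "1 \<le> sqrt (real CARD('r))" using cs by simp
      have r2: "2 \<le> real CARD('r)" using cs by simp
      have nr1: "1 \<le> real CARD('n) - real CARD('r)" using cs by simp
      have "2 * 1 \<le> real CARD('r) * (real CARD('n) - real CARD('r))"
        using r2 nr1 by (intro mult_mono) auto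
      hence t7: "7 \<le> 1 + 3 * real CARD('r) * (real CARD('n) - real CARD('r))" by simp
      have "1 * 7 \<le> sqrt (real CARD('r)) * (1 + 3 * real CARD('r) * (real CARD('n) - real CARD('r)))"
        using s1 t7 by (intro mult_mono) auto
      thus ?thesis by simp
    qed
    hence K5: "5 / min_nonzero_entry Xs \<le> K" unfolding K_def using m0 by (intro divide_right_mono) auto
    show ?thesis
    proof (rule exI[of _ \<delta>], rule conjI[OF d(1)], intro allI impI)
      fix \<epsilon> :: real and X :: "real^'r^'n"
      assume "norm (X - Xs) \<le> \<delta> \<and> X \<in> Stiefel \<and> vartheta X = \<epsilon>"
      hence XSt: "X \<in> Stiefel" and cl: "norm (X - Xs) \<le> \<delta>" by auto
      obtain Z where Z: "Z \<in> Splus" "norm (X - Z) \<le> (5 / min_nonzero_entry Xs) * vartheta X"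
        using d(2) XSt cl by blast
      have *: "f X - fstar f + K * Lf * vartheta X \<ge> 0" by (rule bound_from_eb[OF Lf gm XSt Z K5])
      show "f X - fstar f
                + ((21/10) * sqrt (real CARD('r)) * (1 + 3 * real CARD('r) * (real CARD('n) - real CARD('r)))
                    / min_nonzero_entry Xs) * Lf * vartheta X \<ge> 0" using * unfolding K_def .
    qed
  qed
  have loc: "\<exists>\<delta>>0. \<exists>C. \<forall>X\<in>Stiefel. norm (X - Y) \<le> \<delta> \<longrightarrow> 0 \<le> f X - fstar f + C * vartheta X"
    if gm: "global_min_P f Y" for Y
  proof (rule local_at_min[OF Lf gm])
    have YS: "Y \<in> Splus" using gm by (simp add: global_min_P_def)
    have r1: "CARD('r) \<ge> 1" by (simp add: Suc_leI)
    show "CARD('r) = 1 \<or> (\<forall>l. \<exists>j. Y$l$j \<noteq> 0)"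
    proof (cases "CARD('r) = 1")
      case False
      note rne = False
      show ?thesis
      proof (cases "CARD('n) = CARD('r)")
        case True
        thus ?thesis using square_nozero[OF YS] by blast
      next
        case False2: False
        have "CARD('n) > CARD('r) \<and> CARD('r) > 1" using nr r1 rne False2 by linarith
        thus ?thesis using nozero gm by (auto simp: has_zero_row_def)
      qed
    qed simp
  qed
  obtain \<rho>0 where r0: "\<rho>0 > 0" "\<forall>Y\<in>Stiefel. 0 \<le> f Y - fstar f + \<rho>0 * vartheta Y"
    using global_bound[OF nr Lf loc] by blast
  show "\<exists>\<rho>bar>0. \<forall>\<rho>\<ge>\<rho>bar. {X. global_min_penalty f \<rho> X} = {X. global_min_P f X}"
  proof (rule exI[of _ "2 * \<rho>0"], rule conjI, simp add: r0(1), intro allI impI set_eqI)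
    fix \<rho> :: real and X :: "real^'r^'n"
    assume rho: "2 * \<rho>0 \<le> \<rho>"
    have XmSt: "Xm \<in> Stiefel" and Xmnn: "Xm \<in> nonneg_mats" using XmS by (auto simp: Splus_def)
    have thXm: "vartheta Xm = 0" by (rule vartheta_nn0[OF Xmnn])
    show "X \<in> {X. global_min_penalty f \<rho> X} \<longleftrightarrow> X \<in> {X. global_min_P f X}"
    proof
      assume "X \<in> {X. global_min_penalty f \<rho> X}"
      hence XSt: "X \<in> Stiefel" and pm: "\<forall>Y\<in>Stiefel. f X + \<rho> * vartheta X \<le> f Y + \<rho> * vartheta Y"
        by (auto simp: global_min_penalty_def)
      have a: "f X + \<rho> * vartheta X \<le> f Xm" using pm XmSt thXm by force
      have b: "0 \<le> f X - f Xm + \<rho>0 * vartheta X" using r0(2) XSt fsXm by simp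
      have "(\<rho> - \<rho>0) * vartheta X \<le> 0" using a b by (simp add: algebra_simps)
      moreover have "\<rho> - \<rho>0 > 0" using rho r0(1) by simp
      ultimately have "vartheta X \<le> 0" by (simp add: mult_le_0_iff)
      hence th0: "vartheta X = 0" using vartheta_nonneg[of X] by simp
      hence XS: "X \<in> Splus" using vartheta_zero XSt by (auto simp: Splus_def)
      have "f X \<le> f Xm" using a th0 by simp
      hence "\<forall>Y\<in>Splus. f X \<le> f Y" using gXm by (auto simp: global_min_P_def)
      thus "X \<in> {X. global_min_P f X}" using XS by (simp add: global_min_P_def)
    next
      assume "X \<in> {X. global_min_P f X}"
      hence gX: "global_min_P f X" by simp
      have XS: "X \<in> Splus" using gX by (simp add: global_min_P_def)
      have XSt: "X \<in> Stiefel" and th0: "vartheta X = 0" using XS vartheta_nn0 by (auto simp: Splus_def)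
      have fX: "f X = fstar f" using fstar_eq[OF gX] by simp
      have "f X + \<rho> * vartheta X \<le> f Y + \<rho> * vartheta Y" if "Y \<in> Stiefel" for Y
      proof -
        have "0 \<le> f Y - fstar f + \<rho>0 * vartheta Y" using r0(2) that by blast
        moreover have "\<rho>0 * vartheta Y \<le> \<rho> * vartheta Y"
          using rho r0(1) vartheta_nonneg[of Y] by (intro mult_right_mono) auto
        ultimately show ?thesis using th0 fX by simp
      qed
      thus "X \<in> {X. global_min_penalty f \<rho> X}" using XSt by (simp add: global_min_penalty_def)
    qed
  qed
qed

end
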